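(* Let $\rho$ be a fermionic state of $\mathsf{L}_\mathsf{F}$, $N\ge1$ and $\varepsilon>0$. The projector $P_{N,\varepsilon}(\rho)$ onto the $\varepsilon$-typical subspace of $\rho$ is (the Jordan–Wigner representative of) the Kraus operator of an admissible fermionic transformation on $\mathsf{L}_\mathsf{F}^{\boxtimes N}$.
   Context: A system $\mathsf{L}_\mathsf{F}$ of $L$ local fermionic modes is described by field operators $\varphi_1,\dots,\varphi_L$ with canonical anticommutation relations; the Jordan–Wigner isomorphism $J$ identifies the Fock basis $(\varphi_1^\dagger)^{n_1}\cdots(\varphi_L^\dagger)^{n_L}|\Omega\rangle$ with the computational basis of $L$ qubits, with $J(\varphi_i)=(\bigotimes_{l<i}\sigma^z_l)\otimes\sigma^-_i\otimes(\bigotimes_{k>i}I_k)$, extended linearly and multiplicatively. Fermionic states $\rho$ are linear combinations of products of an even number of field operators with $J(\rho)\geq0$ block-diagonal in the even/odd total-occupation subspaces; $\rho^{\boxtimes N}$ is the $N$-copy state, with $J(\rho^{\boxtimes N})=J(\rho)^{\otimes N}$. Admissible fermionic transformations are completely positive maps whose Kraus operators each are linear combinations of products of field operators with either all an even or all an odd number of factors. Typical subspace: let $J(\rho)=\sum_i p_i|x_i\rangle\langle x_i|$ be an orthonormal eigendecomposition, $X$ the random variable with values $x_i$ and probabilities $p_i$, and $S_f(\rho)=-\sum_ip_i\log_2p_i$. For a sequence $\mathbf{i}=(i_1,\dots,i_N)$ let $|x_{\mathbf{i}}\rangle=|x_{i_1}\rangle\otimes\cdots\otimes|x_{i_N}\rangle$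 and $p_{\mathbf{i}}=\prod_jp_{i_j}$; the sequence is $\varepsilon$-typical if $|\frac1N\log_2\frac{1}{p_{\mathbf{i}}}-S_f(\rho)|\leq\varepsilon$. Then $P_{N,\varepsilon}(\rho):=\sum_{\mathbf{i}\ \varepsilon\text{-typical}}|x_{\mathbf{i}}\rangle\langle x_{\mathbf{i}}|$. *)

theory Defs
  imports Complex_Main "Jordan_Normal_Form.Matrix"
begin

text \<open>Operators on n qubits (equivalently, via Jordan-Wigner, on n fermionic modes) are
complex 2^n x 2^n matrices. The computational basis index x < 2^n encodes the occupation
numbers: the occupation of mode k (k < n, mode 1 of the paper is k = 0) is the
(n-1-k)-th binary digit of x, so mode 0 is the most significant bit. With this convention
the Kronecker product of states of copies 1,...,N agrees with the natural mode ordering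
of the N*L-mode system.\<close>

definition occ :: "nat \<Rightarrow> nat \<Rightarrow> nat \<Rightarrow> bool" where
  "occ n k x \<longleftrightarrow> odd (x div 2 ^ (n - 1 - k))"

text \<open>Jordan-Wigner image of the annihilation operator of mode i:
 (sigma^z on modes l < i) tensor sigma^- on mode i tensor identities, with
 sigma^z |m> = (-1)^m |m> and sigma^- = |0><1|.\<close>
definition field_op :: "nat \<Rightarrow> nat \<Rightarrow> complex mat" where
  "field_op n i = mat (2 ^ n) (2 ^ n) (\<lambda>(x, y).
     if occ n i y \<and> x + 2 ^ (n - 1 - i) = y
     then (-1) ^ card {l. l < i \<and> occ n l y} else 0)"

definition adj :: "complex mat \<Rightarrow> complex mat" where
  "adj A = mat (dim_col A) (dim_row A) (\<lambda>(i, j). cnj (A $$ (j, i)))"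

definition field :: "nat \<Rightarrow> nat \<times> bool \<Rightarrow> complex mat" where
  "field n f = (if snd f then adj (field_op n (fst f)) else field_op n (fst f))"

definition field_prod :: "nat \<Rightarrow> (nat \<times> bool) list \<Rightarrow> complex mat" where
  "field_prod n w = foldr (\<lambda>f M. field n f * M) w (1\<^sub>m (2 ^ n))"

definition parity_ops :: "nat \<Rightarrow> bool \<Rightarrow> complex mat set" where
  "parity_ops n b = {M. \<exists>cws :: (complex \<times> (nat \<times> bool) list) list.
      (\<forall>(c, w) \<in> set cws. (\<forall>f \<in> set w. fst f < n) \<and> even (length w) = b) \<and>
      M = foldr (\<lambda>(c, w) S. c \<cdot>\<^sub>m field_prod n w + S) cws (0\<^sub>m (2 ^ n) (2 ^ n))}"

definition even_ops :: "nat \<Rightarrow> complex mat set" where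
  "even_ops n = parity_ops n True"

definition odd_ops :: "nat \<Rightarrow> complex mat set" where
  "odd_ops n = parity_ops n False"

definition parity :: "nat \<Rightarrow> nat \<Rightarrow> bool" where
  "parity n x = even (card {k. k < n \<and> occ n k x})"

definition psd :: "complex mat \<Rightarrow> nat \<Rightarrow> bool" where
  "psd A d \<longleftrightarrow> A \<in> carrier_mat d d \<and> adj A = A \<and>
     (\<forall>v \<in> carrier_vec d. Re (conjugate v \<bullet> (A *\<^sub>v v)) \<ge> 0)"

definition fermionic_state :: "nat \<Rightarrow> complex mat \<Rightarrow> bool" where
  "fermionic_state L \<rho> \<longleftrightarrow> \<rho> \<in> even_ops L \<and> psd \<rho> (2 ^ L) \<and> (\<Sum>i<2 ^ L. \<rho> $$ (i, i)) = 1 \<and>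
     (\<forall>x < 2 ^ L. \<forall>y < 2 ^ L. parity L x \<noteq> parity L y \<longrightarrow> \<rho> $$ (x, y) = 0)"

definition outer :: "complex vec \<Rightarrow> complex mat" where
  "outer v = mat (dim_vec v) (dim_vec v) (\<lambda>(i, j). v $ i * cnj (v $ j))"

definition eigendecomp :: "nat \<Rightarrow> complex mat \<Rightarrow> (nat \<Rightarrow> real) \<Rightarrow> (nat \<Rightarrow> complex vec) \<Rightarrow> bool" where
  "eigendecomp d \<rho> p x \<longleftrightarrow>
     (\<forall>i < d. x i \<in> carrier_vec d) \<and>
     (\<forall>i < d. \<forall>j < d. conjugate (x j) \<bullet> x i = (if i = j then 1 else 0)) \<and>
     \<rho> = foldr (\<lambda>i S. complex_of_real (p i) \<cdot>\<^sub>m outer (x i) + S) [0..<d] (0\<^sub>m d d)"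

definition entropy_f :: "nat \<Rightarrow> (nat \<Rightarrow> real) \<Rightarrow> real" where
  "entropy_f d p = - (\<Sum>i<d. p i * log 2 (p i))"

definition seq_prob :: "(nat \<Rightarrow> real) \<Rightarrow> nat list \<Rightarrow> real" where
  "seq_prob p is = (\<Prod>j<length is. p (is ! j))"

text \<open>A sequence is eps-typical; p_i > 0 is made explicit since log2(1/0) = +infinity
mathematically (sequences of probability 0 are never typical).\<close>
definition typical :: "nat \<Rightarrow> (nat \<Rightarrow> real) \<Rightarrow> nat \<Rightarrow> real \<Rightarrow> nat list \<Rightarrow> bool" where
  "typical d p N \<epsilon> is \<longleftrightarrow> seq_prob p is > 0 \<and>
     \<bar>(1 / real N) * log 2 (1 / seq_prob p is) - entropy_f d p\<bar> \<le> \<epsilon>"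

definition kron_vec :: "complex vec \<Rightarrow> complex vec \<Rightarrow> complex vec" where
  "kron_vec u v = vec (dim_vec u * dim_vec v)
     (\<lambda>k. u $ (k div dim_vec v) * v $ (k mod dim_vec v))"

definition tensor_seq :: "(nat \<Rightarrow> complex vec) \<Rightarrow> nat list \<Rightarrow> complex vec" where
  "tensor_seq x is = foldr (\<lambda>i v. kron_vec (x i) v) is (vec 1 (\<lambda>_. 1))"

definition typical_proj :: "nat \<Rightarrow> (nat \<Rightarrow> real) \<Rightarrow> (nat \<Rightarrow> complex vec) \<Rightarrow> nat \<Rightarrow> real \<Rightarrow> complex mat" where
  "typical_proj d p x N \<epsilon> =
     (let D = d ^ N;
          seqs = filter (typical d p N \<epsilon>) (List.n_lists N [0..<d])
      in foldr (\<lambda>is S. outer (tensor_seq x is) + S) seqs (0\<^sub>m D D))"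

text \<open>An admissible fermionic transformation on n modes, given by its (finite) list of
Kraus operators X \<mapsto> sum_k K_k X K_k^dagger (completely positive by construction); each
Kraus operator is a linear combination of products of field operators with all an even
or all an odd number of factors.\<close>
definition admissible_kraus :: "nat \<Rightarrow> complex mat list \<Rightarrow> bool" where
  "admissible_kraus n Ks \<longleftrightarrow> (\<forall>K \<in> set Ks. K \<in> even_ops n \<or> K \<in> odd_ops n)"

end

theory Submission
  imports Defs
begin


lemma nat_bit_lt: "(z::nat) < 2^n \<Longrightarrow> bit z m \<Longrightarrow> m < n"
proof -
  assume a: "z < 2^n" "bit z m"
  have "take_bit n z = z" using a(1) by (simp add: take_bit_nat_eq_self_iff)
  then have "bit (take_bit n z) m" using a(2) by simp
  then show ?thesis by (simp add: bit_take_bit_iff)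
qed

lemma nat_lt_bit: "(\<forall>m\<ge>n. \<not> bit (z::nat) m) \<Longrightarrow> z < 2^n"
proof -
  assume a: "\<forall>m\<ge>n. \<not> bit (z::nat) m"
  have "take_bit n z = z" by (rule bit_eqI) (use a in \<open>auto simp: bit_take_bit_iff not_le\<close>)
  then show ?thesis by (metis take_bit_nat_eq_self_iff)
qed

lemma bit_add_pow: "\<not> bit (z::nat) k \<Longrightarrow> bit (z + 2^k) m = (m = k \<or> bit z m)"
proof -
  assume a: "\<not> bit (z::nat) k"
  have "z + 2^k = or z (2^k)" by (rule disjunctive_add) (use a in \<open>auto simp: bit_exp_iff\<close>)
  then show ?thesis by (auto simp: bit_or_iff bit_exp_iff)
qed

lemma bit_sub_pow: "bit (z::nat) k \<Longrightarrow> bit (z - 2^k) m = (m \<noteq> k \<and> bit z m)"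
proof -
  assume a: "bit (z::nat) k"
  have "unset_bit k z + 2^k = z"
  proof -
    have "unset_bit k z + 2^k = or (unset_bit k z) (2^k)"
      by (rule disjunctive_add) (auto simp: bit_exp_iff bit_unset_bit_iff)
    also have "\<dots> = z" by (rule bit_eqI) (use a in \<open>auto simp: bit_or_iff bit_exp_iff bit_unset_bit_iff\<close>)
    finally show ?thesis .
  qed
  then have "z - 2^k = unset_bit k z" by linarith
  then show ?thesis by (auto simp: bit_unset_bit_iff)
qed

lemma occ_bit: "occ n i y = bit y (n - 1 - i)"
  by (simp add: occ_def bit_iff_odd)

definition gm :: "nat \<Rightarrow> complex mat \<Rightarrow> (nat \<Rightarrow> bool) \<Rightarrow> (nat \<Rightarrow> nat) \<Rightarrow> bool" where
  "gm n M P U \<longleftrightarrow> M \<in> carrier_mat (2^n) (2^n) \<and>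
    (\<forall>j<2^n. if P j then U j < 2^n \<and> M $$ (U j, j) \<noteq> 0 \<and> (\<forall>i<2^n. i \<noteq> U j \<longrightarrow> M $$ (i, j) = 0)
             else (\<forall>i<2^n. M $$ (i, j) = 0))"

lemma gm_entry_prod:
  assumes A: "A \<in> carrier_mat D D" and B: "B \<in> carrier_mat D D" and i: "i < D" and j: "j < D"
    and e: "e < D" and z: "\<forall>e'<D. e' \<noteq> e \<longrightarrow> B $$ (e', j) = 0"
  shows "(A * B) $$ (i, j) = A $$ (i, e) * B $$ (e, j)"
proof -
  have "(A * B) $$ (i, j) = (\<Sum>e'<D. A $$ (i, e') * B $$ (e', j))"
    using A B i j by (simp add: index_mult_mat scalar_prod_def row_def col_def lessThan_atLeast0)
  also have "\<dots> = A $$ (i, e) * B $$ (e, j)"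
  proof -
    have "(\<Sum>e'<D. A $$ (i, e') * B $$ (e', j)) = A $$ (i, e) * B $$ (e, j) + (\<Sum>e'\<in>{..<D}-{e}. A $$ (i, e') * B $$ (e', j))"
      by (rule sum.remove) (use e in auto)
    also have "(\<Sum>e'\<in>{..<D}-{e}. A $$ (i, e') * B $$ (e', j)) = 0" using z by (auto intro!: sum.neutral)
    finally show ?thesis by simp
  qed
  finally show ?thesis .
qed

lemma gm_entry_zero:
  assumes A: "A \<in> carrier_mat D D" and B: "B \<in> carrier_mat D D" and i: "i < D" and j: "j < D"
    and z: "\<forall>e'<D. B $$ (e', j) = 0"
  shows "(A * B) $$ (i, j) = 0"
proof -
  have "(A * B) $$ (i, j) = (\<Sum>e'<D. A $$ (i, e') * B $$ (e', j))"
    using A B i j by (simp add: index_mult_mat scalar_prod_def row_def col_def lessThan_atLeast0)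
  also have "\<dots> = 0" using z by simp
  finally show ?thesis .
qed

lemma gm_mult:
  assumes a: "gm n A PA UA" and b: "gm n B PB UB"
  shows "gm n (A * B) (\<lambda>j. PB j \<and> PA (UB j)) (UA \<circ> UB)"
proof -
  have A: "A \<in> carrier_mat (2^n) (2^n)" and B: "B \<in> carrier_mat (2^n) (2^n)"
    using a b by (auto simp: gm_def)
  show ?thesis unfolding gm_def
  proof (intro conjI allI impI)
    show "A * B \<in> carrier_mat (2^n) (2^n)" using A B by simp
    fix j :: nat assume j: "j < 2^n"
    show "if PB j \<and> PA (UB j) then (UA \<circ> UB) j < 2 ^ n \<and> (A * B) $$ ((UA \<circ> UB) j, j) \<noteq> 0 \<and>
          (\<forall>i<2 ^ n. i \<noteq> (UA \<circ> UB) j \<longrightarrow> (A * B) $$ (i, j) = 0)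
          else \<forall>i<2 ^ n. (A * B) $$ (i, j) = 0"
    proof (cases "PB j")
      case False
      then have "\<forall>e'<2^n. B $$ (e', j) = 0" using b j by (auto simp: gm_def)
      then show ?thesis using gm_entry_zero[OF A B _ j] False by auto
    next
      case True
      then have e: "UB j < 2^n" "B $$ (UB j, j) \<noteq> 0" "\<forall>e'<2^n. e' \<noteq> UB j \<longrightarrow> B $$ (e', j) = 0"
        using b j unfolding gm_def by metis+
      have ent: "\<And>i. i < 2^n \<Longrightarrow> (A * B) $$ (i, j) = A $$ (i, UB j) * B $$ (UB j, j)"
        using gm_entry_prod[OF A B _ j e(1) e(3)] by blast
      show ?thesis
      proof (cases "PA (UB j)")
        case False
        then have "\<forall>i<2^n. A $$ (i, UB j) = 0" using a e(1) unfolding gm_def by metis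
        then show ?thesis using ent False by auto
      next
        case T2: True
        then have f: "UA (UB j) < 2^n" "A $$ (UA (UB j), UB j) \<noteq> 0" "\<forall>i<2^n. i \<noteq> UA (UB j) \<longrightarrow> A $$ (i, UB j) = 0"
          using a e(1) unfolding gm_def by metis+
        show ?thesis using True T2 f e(2) ent by auto
      qed
    qed
  qed
qed

lemma gm_one: "gm n (1\<^sub>m (2^n)) (\<lambda>_. True) id"
  by (auto simp: gm_def)

lemma gm_ann:
  assumes i: "i < n"
  shows "gm n (field_op n i) (\<lambda>j. bit j (n - 1 - i)) (\<lambda>j. j - 2^(n - 1 - i))"
proof -
  let ?k = "n - 1 - i"
  have ge: "bit j ?k \<Longrightarrow> 2^?k \<le> j" for j :: nat
    by (metis bit_iff_odd div_less even_zero not_le)   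
  show ?thesis unfolding gm_def
  proof (intro conjI allI impI)
    show "field_op n i \<in> carrier_mat (2 ^ n) (2 ^ n)" by (simp add: field_op_def)
    fix j :: nat assume j: "j < 2^n"
    show "if bit j ?k then j - 2 ^ ?k < 2 ^ n \<and> field_op n i $$ (j - 2 ^ ?k, j) \<noteq> 0 \<and>
         (\<forall>ia<2 ^ n. ia \<noteq> j - 2 ^ ?k \<longrightarrow> field_op n i $$ (ia, j) = 0)
       else \<forall>ia<2 ^ n. field_op n i $$ (ia, j) = 0"
      using j ge[of j] by (auto simp: field_op_def occ_bit)
  qed
qed

lemma gm_cre:
  assumes i: "i < n"
  shows "gm n (adj (field_op n i)) (\<lambda>j. \<not> bit j (n - 1 - i)) (\<lambda>j. j + 2^(n - 1 - i))"
proof -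
  let ?k = "n - 1 - i"
  have ge: "bit j ?k \<Longrightarrow> 2^?k \<le> j" for j :: nat
    by (metis bit_iff_odd div_less even_zero not_le)
  have kn: "?k < n" using i by simp
  have lt: "\<not> bit j ?k \<Longrightarrow> j < 2^n \<Longrightarrow> j + 2^?k < 2^n" for j :: nat
    apply (rule nat_lt_bit)
    using kn nat_bit_lt[of j n] by (auto simp: bit_add_pow) (meson not_le)
  have key: "j < 2^n \<Longrightarrow> (bit x ?k \<and> j + 2^?k = x) = (\<not> bit j ?k \<and> x = j + 2^?k)" for j x :: nat
  proof
    assume "bit x ?k \<and> j + 2 ^ ?k = x"
    then show "\<not> bit j ?k \<and> x = j + 2^?k"
      by (metis add_diff_cancel_right' bit_sub_pow)
  next
    assume "\<not> bit j ?k \<and> x = j + 2^?k"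
    then show "bit x ?k \<and> j + 2 ^ ?k = x" by (simp add: bit_add_pow)
  qed
  show ?thesis unfolding gm_def
  proof (intro conjI allI impI)
    show "adj (field_op n i) \<in> carrier_mat (2 ^ n) (2 ^ n)" by (simp add: field_op_def adj_def)
    fix j :: nat assume j: "j < 2^n"
    have ent: "x < 2^n \<Longrightarrow> adj (field_op n i) $$ (x, j) = cnj (if bit x ?k \<and> j + 2^?k = x then (-1) ^ card {l. l < i \<and> occ n l x} else 0)" for x
      using j by (simp add: adj_def field_op_def occ_bit)
    show "if \<not> bit j ?k then j + 2 ^ ?k < 2 ^ n \<and> adj (field_op n i) $$ (j + 2 ^ ?k, j) \<noteq> 0 \<and>
         (\<forall>ia<2 ^ n. ia \<noteq> j + 2 ^ ?k \<longrightarrow> adj (field_op n i) $$ (ia, j) = 0)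
       else \<forall>ia<2 ^ n. adj (field_op n i) $$ (ia, j) = 0"
      using j lt[of j] ent key[OF j] by auto
  qed
qed

lemma gm_field:
  assumes i: "i < n"
  shows "gm n (field n (i, b)) (\<lambda>j. bit j (n - 1 - i) \<noteq> b) (\<lambda>j. if b then j + 2^(n - 1 - i) else j - 2^(n - 1 - i))"
  using gm_ann[OF i] gm_cre[OF i] by (cases b) (auto simp: field_def)

lemma field_carrier: "field n f \<in> carrier_mat (2^n) (2^n)"
  by (simp add: field_def field_op_def adj_def)

lemma field_prod_Cons: "field_prod n (f # w) = field n f * field_prod n w"
  by (simp add: field_prod_def)

lemma field_prod_Nil: "field_prod n [] = 1\<^sub>m (2^n)"
  by (simp add: field_prod_def)

lemma field_prod_carrier: "field_prod n w \<in> carrier_mat (2^n) (2^n)"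
  by (induction w) (auto simp: field_prod_Cons field_prod_Nil intro!: mult_carrier_mat[OF field_carrier])

lemma field_prod_append: "field_prod n (w1 @ w2) = field_prod n w1 * field_prod n w2"
proof (induction w1)
  case Nil
  then show ?case using field_prod_carrier[of n w2] by (simp add: field_prod_Nil)
next
  case (Cons f w1)
  then show ?case
    by (simp add: field_prod_Cons assoc_mult_mat[OF field_carrier field_prod_carrier field_prod_carrier])
qed

definition piece :: "nat \<Rightarrow> bool \<Rightarrow> bool \<Rightarrow> (nat \<times> bool) list" where
  "piece i bx byy = (if bx = byy then (if bx then [(i, True), (i, False)] else [(i, False), (i, True)])
     else (if bx then [(i, True)] else [(i, False)]))"

lemma gm_piece:
  assumes i: "i < n"
  shows "\<exists>P U. gm n (field_prod n (piece i bx byy)) P U \<and> (\<forall>j. P j = (bit j (n - 1 - i) = byy)) \<and>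
    (\<forall>j. P j \<longrightarrow> (\<forall>m. bit (U j) m = (if m = n - 1 - i then bx else bit j m)))"
proof -
  let ?k = "n - 1 - i"
  have g1: "gm n (field_prod n [(i, b)]) (\<lambda>j. True \<and> bit (id j) ?k \<noteq> b) ((\<lambda>j. if b then j + 2^?k else j - 2^?k) \<circ> id)" for b
    using gm_mult[OF gm_field[OF i, of b] gm_one] by (simp add: field_prod_Cons field_prod_Nil)
  have g2: "gm n (field_prod n [(i, b), (i, c)])
     (\<lambda>j. (True \<and> bit (id j) ?k \<noteq> c) \<and> bit (((\<lambda>j. if c then j + 2^?k else j - 2^?k) \<circ> id) j) ?k \<noteq> b)
     ((\<lambda>j. if b then j + 2^?k else j - 2^?k) \<circ> ((\<lambda>j. if c then j + 2^?k else j - 2^?k) \<circ> id))" for b c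
    using gm_mult[OF gm_field[OF i, of b] g1[of c]] by (simp add: field_prod_Cons field_prod_Nil)
  show ?thesis
  proof (cases bx; cases byy)
    assume a: bx byy
    have e: "piece i bx byy = [(i, True), (i, False)]" using a by (simp add: piece_def)
    show ?thesis unfolding e
      apply (rule exI, rule exI, rule conjI, rule g2[of True False])
      using a by (auto simp: bit_sub_pow bit_add_pow)
  next
    assume a: bx "\<not> byy"
    have e: "piece i bx byy = [(i, True)]" using a by (simp add: piece_def)
    show ?thesis unfolding e
      apply (rule exI, rule exI, rule conjI, rule g1[of True])
      using a by (auto simp: bit_sub_pow bit_add_pow)
  next
    assume a: "\<not> bx" byy
    have e: "piece i bx byy = [(i, False)]" using a by (simp add: piece_def)
    show ?thesis unfolding e
      apply (rule exI, rule exI, rule conjI, rule g1[of False])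
      using a by (auto simp: bit_sub_pow bit_add_pow)
  next
    assume a: "\<not> bx" "\<not> byy"
    have e: "piece i bx byy = [(i, False), (i, True)]" using a by (simp add: piece_def)
    show ?thesis unfolding e
      apply (rule exI, rule exI, rule conjI, rule g2[of False True])
      using a by (auto simp: bit_sub_pow bit_add_pow)
  qed
qed

fun Wd :: "nat \<Rightarrow> nat \<Rightarrow> nat \<Rightarrow> nat list \<Rightarrow> (nat \<times> bool) list" where
  "Wd n x y [] = []"
| "Wd n x y (i # ms) = piece i (bit x (n - 1 - i)) (bit y (n - 1 - i)) @ Wd n x y ms"

lemma gm_W:
  assumes "distinct ms" "\<forall>i\<in>set ms. i < n"
  shows "\<exists>P U. gm n (field_prod n (Wd n x y ms)) P U \<and>
     (\<forall>j. P j = (\<forall>i\<in>set ms. bit j (n - 1 - i) = bit y (n - 1 - i))) \<and>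
     (\<forall>j. P j \<longrightarrow> (\<forall>m. bit (U j) m = (if m \<in> (\<lambda>i. n - 1 - i) ` set ms then bit x m else bit j m)))"
  using assms
proof (induction ms)
  case Nil
  show ?case by (rule exI[of _ "\<lambda>_. True"], rule exI[of _ id]) (use gm_one[of n] in \<open>auto simp: field_prod_Nil id_def\<close>)
next
  case (Cons i ms)
  then have i: "i < n" and dis: "i \<notin> set ms" "distinct ms" and ms: "\<forall>i\<in>set ms. i < n" by auto
  obtain P1 U1 where p1: "gm n (field_prod n (piece i (bit x (n - 1 - i)) (bit y (n - 1 - i)))) P1 U1"
    "\<forall>j. P1 j = (bit j (n - 1 - i) = bit y (n - 1 - i))"
    "\<forall>j. P1 j \<longrightarrow> (\<forall>m. bit (U1 j) m = (if m = n - 1 - i then bit x (n - 1 - i) else bit j m))"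
    using gm_piece[OF i] by blast
  obtain P2 U2 where p2: "gm n (field_prod n (Wd n x y ms)) P2 U2"
    "\<forall>j. P2 j = (\<forall>i\<in>set ms. bit j (n - 1 - i) = bit y (n - 1 - i))"
    "\<forall>j. P2 j \<longrightarrow> (\<forall>m. bit (U2 j) m = (if m \<in> (\<lambda>i. n - 1 - i) ` set ms then bit x m else bit j m))"
    using Cons.IH[OF dis(2) ms] by blast
  have nk: "n - 1 - i \<notin> (\<lambda>i. n - 1 - i) ` set ms"
  proof
    assume "n - 1 - i \<in> (\<lambda>i. n - 1 - i) ` set ms"
    then obtain i' where "i' \<in> set ms" "n - 1 - i = n - 1 - i'" by auto
    moreover have "i' < n" using ms \<open>i' \<in> set ms\<close> by auto
    ultimately have "i = i'" using i by arith
    then show False using dis(1) \<open>i' \<in> set ms\<close> by simp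
  qed
  have g: "gm n (field_prod n (Wd n x y (i # ms))) (\<lambda>j. P2 j \<and> P1 (U2 j)) (U1 \<circ> U2)"
    using gm_mult[OF p1(1) p2(1)] by (simp add: field_prod_append)
  show ?case
  proof (intro exI conjI allI impI)
    show "gm n (field_prod n (Wd n x y (i # ms))) (\<lambda>j. P2 j \<and> P1 (U2 j)) (U1 \<circ> U2)" by (rule g)
  next
    fix j
    show "(P2 j \<and> P1 (U2 j)) = (\<forall>i\<in>set (i # ms). bit j (n - 1 - i) = bit y (n - 1 - i))"
      using p1(2) p2(2,3) nk by auto
  next
    fix j m assume "P2 j \<and> P1 (U2 j)"
    then show "bit ((U1 \<circ> U2) j) m = (if m \<in> (\<lambda>i. n - 1 - i) ` set (i # ms) then bit x m else bit j m)"
      using p1(3) p2(3) nk by auto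
  qed
qed

lemma length_W:
  assumes "distinct ms"
  shows "even (length (Wd n x y ms)) = even (card {i \<in> set ms. bit x (n - 1 - i) \<noteq> bit y (n - 1 - i)})"
  using assms
proof (induction ms)
  case Nil
  then show ?case by simp
next
  case (Cons i ms)
  let ?S = "{i' \<in> set ms. bit x (n - 1 - i') \<noteq> bit y (n - 1 - i')}"
  have IH: "even (length (Wd n x y ms)) = even (card ?S)" using Cons by simp
  show ?case
  proof (cases "bit x (n - 1 - i) = bit y (n - 1 - i)")
    case True
    have "{i' \<in> set (i # ms). bit x (n - 1 - i') \<noteq> bit y (n - 1 - i')} = ?S" using True by auto
    then show ?thesis using IH True by (simp add: piece_def)
  next
    case False
    have "{i' \<in> set (i # ms). bit x (n - 1 - i') \<noteq> bit y (n - 1 - i')} = insert i ?S" using False by auto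
    moreover have "card (insert i ?S) = Suc (card ?S)" using Cons.prems by simp
    ultimately show ?thesis using IH False by (simp add: piece_def)
  qed
qed

lemma card_symdiff_even:
  assumes "finite A" "finite B"
  shows "(even (card A) = even (card B)) = even (card ((A - B) \<union> (B - A)))"
proof -
  have "card A = card (A \<inter> B) + card (A - B)" using assms(1) by (rule card_Int_Diff)
  moreover have "card B = card (B \<inter> A) + card (B - A)" using assms(2) by (rule card_Int_Diff)
  moreover have "B \<inter> A = A \<inter> B" by auto
  moreover have "card ((A - B) \<union> (B - A)) = card (A - B) + card (B - A)"
    using assms by (intro card_Un_disjoint) auto
  ultimately show ?thesis by (auto simp: even_add)
qed

lemma unit_even:
  assumes x: "x < 2^n" and y: "y < 2^n" and par: "parity n x = parity n y"
  shows "\<exists>w s. (\<forall>f\<in>set w. fst f < n) \<and> even (length w) \<and> s \<noteq> 0 \<and>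
     (\<forall>i<2^n. \<forall>j<2^n. field_prod n w $$ (i, j) = (if i = x \<and> j = y then s else 0))"
proof -
  obtain P U where g: "gm n (field_prod n (Wd n x y [0..<n])) P U"
    "\<forall>j. P j = (\<forall>i\<in>set [0..<n]. bit j (n - 1 - i) = bit y (n - 1 - i))"
    "\<forall>j. P j \<longrightarrow> (\<forall>m. bit (U j) m = (if m \<in> (\<lambda>i. n - 1 - i) ` set [0..<n] then bit x m else bit j m))"
    using gm_W[of "[0..<n]" n x y] by auto
  have K: "(\<lambda>i. n - 1 - i) ` set [0..<n] = {..<n}"
  proof
    show "(\<lambda>i. n - 1 - i) ` set [0..<n] \<subseteq> {..<n}" by auto
    show "{..<n} \<subseteq> (\<lambda>i. n - 1 - i) ` set [0..<n]"
    proof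
      fix m assume "m \<in> {..<n}"
      then have "m = n - 1 - (n - 1 - m)" "n - 1 - m \<in> set [0..<n]" by auto
      then show "m \<in> (\<lambda>i. n - 1 - i) ` set [0..<n]" by blast
    qed
  qed
  have Pj: "P j = (j = y)" if j: "j < 2^n" for j
  proof -
    have "P j = (\<forall>i\<in>set [0..<n]. bit j (n - 1 - i) = bit y (n - 1 - i))" using g(2) by blast
    also have "\<dots> = (\<forall>m\<in>(\<lambda>i. n - 1 - i) ` set [0..<n]. bit j m = bit y m)" by blast
    also have "\<dots> = (\<forall>m<n. bit j m = bit y m)" unfolding K by blast
    also have "\<dots> = (j = y)"
    proof
      assume a: "\<forall>m<n. bit j m = bit y m"
      show "j = y"
      proof (rule bit_eqI)
        fix m show "bit j m = bit y m"
        proof (cases "m < n")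
          case True with a show ?thesis by simp
        next
          case False then show ?thesis using nat_bit_lt[OF j, of m] nat_bit_lt[OF y, of m] by auto
        qed
      qed
    qed simp
    finally show ?thesis .
  qed
  have Uy: "U y = x"
  proof (rule bit_eqI)
    fix m
    have "P y" using Pj y by simp
    then have "bit (U y) m = (if m < n then bit x m else bit y m)" using g(3) K by auto
    then show "bit (U y) m = bit x m" using nat_bit_lt[OF x, of m] nat_bit_lt[OF y, of m] by (cases "m < n") auto
  qed
  have gmv: "\<forall>j<2^n. if P j then U j < 2^n \<and> field_prod n (Wd n x y [0..<n]) $$ (U j, j) \<noteq> 0 \<and>
      (\<forall>i<2^n. i \<noteq> U j \<longrightarrow> field_prod n (Wd n x y [0..<n]) $$ (i, j) = 0)
      else (\<forall>i<2^n. field_prod n (Wd n x y [0..<n]) $$ (i, j) = 0)"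
    using g(1) unfolding gm_def by blast
  have ent: "\<forall>i<2^n. \<forall>j<2^n. field_prod n (Wd n x y [0..<n]) $$ (i, j) =
     (if i = x \<and> j = y then field_prod n (Wd n x y [0..<n]) $$ (x, y) else 0)"
  proof (intro allI impI)
    fix i j assume i: "i < (2::nat)^n" and j: "j < (2::nat)^n"
    show "field_prod n (Wd n x y [0..<n]) $$ (i, j) =
     (if i = x \<and> j = y then field_prod n (Wd n x y [0..<n]) $$ (x, y) else 0)"
      using gmv[rule_format, OF j] Pj[OF j] Uy i by (cases "j = y") auto
  qed
  have nz: "field_prod n (Wd n x y [0..<n]) $$ (x, y) \<noteq> 0"
    using gmv[rule_format, OF y] Pj[OF y] Uy by auto
  have fs: "\<forall>f\<in>set (Wd n x y ms). fst f < n" if "\<forall>i\<in>set ms. i < n" for ms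
    using that by (induction ms) (auto simp: piece_def)
  have ev: "even (length (Wd n x y [0..<n]))"
  proof -
    let ?A = "{k. k < n \<and> occ n k x}" and ?B = "{k. k < n \<and> occ n k y}"
    have "(?A - ?B) \<union> (?B - ?A) = {i \<in> set [0..<n]. bit x (n - 1 - i) \<noteq> bit y (n - 1 - i)}"
      by (auto simp: occ_bit)
    then show ?thesis using length_W[of "[0..<n]" n x y] card_symdiff_even[of ?A ?B] par
      by (simp add: parity_def)
  qed
  have "\<forall>f\<in>set (Wd n x y [0..<n]). fst f < n" using fs[of "[0..<n]"] by simp
  then show ?thesis using ev nz ent by blast
qed



lemma foldr_entry:
  assumes "\<forall>a\<in>set l. g a \<in> carrier_mat D D" "\<forall>a\<in>set l. \<forall>S\<in>carrier_mat D D. h a S = g a + S"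
  shows "foldr h l (0\<^sub>m D D) \<in> carrier_mat D D \<and>
    (\<forall>i<D. \<forall>j<D. foldr h l (0\<^sub>m D D) $$ (i, j) = (\<Sum>a\<leftarrow>l. g a $$ (i, j)))"
  using assms
proof (induction l)
  case Nil
  then show ?case by simp
next
  case (Cons a l)
  then have IH: "foldr h l (0\<^sub>m D D) \<in> carrier_mat D D"
      "\<forall>i<D. \<forall>j<D. foldr h l (0\<^sub>m D D) $$ (i, j) = (\<Sum>a\<leftarrow>l. g a $$ (i, j))" by auto
  have e: "foldr h (a # l) (0\<^sub>m D D) = g a + foldr h l (0\<^sub>m D D)" using Cons.prems IH(1) by simp
  have ga: "g a \<in> carrier_mat D D" using Cons.prems by simp
  show ?case unfolding e using IH ga by auto
qed

lemma pp_even: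
  assumes M: "M \<in> carrier_mat (2^n) (2^n)"
    and pp: "\<forall>i<2^n. \<forall>j<2^n. parity n i \<noteq> parity n j \<longrightarrow> M $$ (i, j) = 0"
  shows "M \<in> even_ops n"
proof -
  let ?D = "2^n :: nat"
  define C where "C ab \<longleftrightarrow> fst ab < ?D \<and> snd ab < ?D \<and> parity n (fst ab) = parity n (snd ab)" for ab :: "nat \<times> nat"
  define Q where "Q ab ws \<longleftrightarrow> (\<forall>f\<in>set (fst ws). fst f < n) \<and> even (length (fst ws)) \<and> snd ws \<noteq> 0 \<and>
     (\<forall>i<2^n. \<forall>j<2^n. field_prod n (fst ws) $$ (i, j) = (if i = fst ab \<and> j = snd ab then snd ws else 0))"
    for ab :: "nat \<times> nat" and ws :: "(nat \<times> bool) list \<times> complex"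
  define wf where "wf ab = (SOME ws. Q ab ws)" for ab
  have Qwf: "Q ab (wf ab)" if "C ab" for ab
  proof -
    obtain a b where ab: "ab = (a, b)" by force
    have c: "a < 2^n" "b < 2^n" "parity n a = parity n b" using that unfolding C_def ab by auto
    obtain w s where ws: "(\<forall>f\<in>set w. fst f < n) \<and> even (length w) \<and> s \<noteq> 0 \<and>
     (\<forall>i<2^n. \<forall>j<2^n. field_prod n w $$ (i, j) = (if i = a \<and> j = b then s else 0))"
      using unit_even[OF c] by blast
    have "Q ab (w, s)" unfolding Q_def ab using ws by simp
    then have "\<exists>ws. Q ab ws" by blast
    then show ?thesis unfolding wf_def by (rule someI_ex)
  qed
  define pairs where "pairs = filter C (List.product [0..<?D] [0..<?D])"
  have dp: "distinct pairs" unfolding pairs_def by (simp add: distinct_product)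
  have sp: "set pairs = {ab. C ab}" unfolding pairs_def C_def by auto
  define cws where "cws = map (\<lambda>ab. (M $$ ab / snd (wf ab), fst (wf ab))) pairs"
  define h where "h = (\<lambda>(c, w) S. c \<cdot>\<^sub>m field_prod n w + S)"
  define g where "g = (\<lambda>(c, w). c \<cdot>\<^sub>m field_prod n w)"
  have fe: "foldr h cws (0\<^sub>m ?D ?D) \<in> carrier_mat ?D ?D \<and>
    (\<forall>i<?D. \<forall>j<?D. foldr h cws (0\<^sub>m ?D ?D) $$ (i, j) = (\<Sum>a\<leftarrow>cws. g a $$ (i, j)))"
    by (rule foldr_entry) (auto simp: g_def h_def field_prod_carrier)
  have eq: "M = foldr h cws (0\<^sub>m ?D ?D)"
  proof (rule eq_matI)
    show "dim_row M = dim_row (foldr h cws (0\<^sub>m ?D ?D))" "dim_col M = dim_col (foldr h cws (0\<^sub>m ?D ?D))"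
      using fe M by auto
    fix i j assume "i < dim_row (foldr h cws (0\<^sub>m ?D ?D))" "j < dim_col (foldr h cws (0\<^sub>m ?D ?D))"
    then have i: "i < ?D" and j: "j < ?D" using fe by auto
    have "foldr h cws (0\<^sub>m ?D ?D) $$ (i, j) = (\<Sum>a\<leftarrow>cws. g a $$ (i, j))" using fe i j by blast
    also have "\<dots> = (\<Sum>ab\<leftarrow>pairs. (M $$ ab / snd (wf ab)) * field_prod n (fst (wf ab)) $$ (i, j))"
    proof -
      have sm: "(c \<cdot>\<^sub>m field_prod n w) $$ (i, j) = c * field_prod n w $$ (i, j)" for c w
        using i j field_prod_carrier[of n w] by (simp add: carrier_matD)
      show ?thesis unfolding cws_def g_def by (simp add: comp_def case_prod_beta sm)
    qed
    also have "\<dots> = (\<Sum>ab\<in>set pairs. (M $$ ab / snd (wf ab)) * field_prod n (fst (wf ab)) $$ (i, j))"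
      by (rule sum_list_distinct_conv_sum_set[OF dp])
    also have "\<dots> = (\<Sum>ab\<in>set pairs. if ab = (i, j) then M $$ (i, j) else 0)"
    proof (rule sum.cong)
      fix ab assume "ab \<in> set pairs"
      then have "C ab" using sp by auto
      then have q: "Q ab (wf ab)" by (rule Qwf)
      then have "field_prod n (fst (wf ab)) $$ (i, j) = (if i = fst ab \<and> j = snd ab then snd (wf ab) else 0)"
        "snd (wf ab) \<noteq> 0"
        using i j unfolding Q_def by auto
      then show "(M $$ ab / snd (wf ab)) * field_prod n (fst (wf ab)) $$ (i, j) = (if ab = (i, j) then M $$ (i, j) else 0)"
        by (cases ab) auto
    qed simp
    also have "\<dots> = (if (i, j) \<in> set pairs then M $$ (i, j) else 0)"
      by (simp add: sum.delta')
    also have "\<dots> = M $$ (i, j)" using pp i j sp unfolding C_def by auto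
    finally show "M $$ (i, j) = foldr h cws (0\<^sub>m ?D ?D) $$ (i, j)" by simp
  qed
  have cw: "\<forall>(c, w)\<in>set cws. (\<forall>f\<in>set w. fst f < n) \<and> even (length w) = True"
  proof
    fix cw assume "cw \<in> set cws"
    then obtain ab where ab: "ab \<in> set pairs" "cw = (M $$ ab / snd (wf ab), fst (wf ab))" unfolding cws_def by auto
    then have "Q ab (wf ab)" using sp Qwf by auto
    then show "case cw of (c, w) \<Rightarrow> (\<forall>f\<in>set w. fst f < n) \<and> even (length w) = True"
      using ab unfolding Q_def by auto
  qed
  show ?thesis unfolding even_ops_def parity_ops_def
    using cw eq unfolding h_def by blast
qed



definition Fc :: "nat \<Rightarrow> (nat \<Rightarrow> complex vec) \<Rightarrow> (nat \<Rightarrow> real) \<Rightarrow> nat \<Rightarrow> nat \<Rightarrow> complex" where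
  "Fc d x c a b = (\<Sum>i<d. complex_of_real (c i) * (x i $ a * cnj (x i $ b)))"

context
  fixes L :: nat and \<rho> :: "complex mat" and p :: "nat \<Rightarrow> real" and x :: "nat \<Rightarrow> complex vec"
  assumes fs: "fermionic_state L \<rho>" and ed: "eigendecomp (2 ^ L) \<rho> p x"
begin

abbreviation "d \<equiv> (2::nat) ^ L"

lemma xcar: "i < d \<Longrightarrow> x i \<in> carrier_vec d"
  using ed by (simp add: eigendecomp_def)

lemma orth: "k < d \<Longrightarrow> i < d \<Longrightarrow> (\<Sum>e<d. cnj (x k $ e) * x i $ e) = (if i = k then 1 else 0)"
proof -
  assume k: "k < d" and i: "i < d"
  have "conjugate (x k) \<bullet> x i = (if i = k then 1 else 0)" using ed i k by (simp add: eigendecomp_def)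
  moreover have "conjugate (x k) \<bullet> x i = (\<Sum>e<d. cnj (x k $ e) * x i $ e)"
    using xcar[OF i] xcar[OF k] by (simp add: scalar_prod_def lessThan_atLeast0)
  ultimately show ?thesis by simp
qed

lemma rho_entry: "a < d \<Longrightarrow> b < d \<Longrightarrow> \<rho> $$ (a, b) = Fc d x p a b"
proof -
  assume a: "a < d" and b: "b < d"
  have r: "\<rho> = foldr (\<lambda>i S. complex_of_real (p i) \<cdot>\<^sub>m outer (x i) + S) [0..<d] (0\<^sub>m d d)"
    using ed by (simp add: eigendecomp_def)
  have oc: "i < d \<Longrightarrow> outer (x i) \<in> carrier_mat d d" for i using xcar[of i] by (simp add: outer_def)
  have fe: "foldr (\<lambda>i S. complex_of_real (p i) \<cdot>\<^sub>m outer (x i) + S) [0..<d] (0\<^sub>m d d) \<in> carrier_mat d d \<and>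
    (\<forall>i<d. \<forall>j<d. foldr (\<lambda>i S. complex_of_real (p i) \<cdot>\<^sub>m outer (x i) + S) [0..<d] (0\<^sub>m d d) $$ (i, j) =
      (\<Sum>k\<leftarrow>[0..<d]. (complex_of_real (p k) \<cdot>\<^sub>m outer (x k)) $$ (i, j)))"
    by (rule foldr_entry) (use oc in auto)
  have "\<rho> $$ (a, b) = (\<Sum>k\<leftarrow>[0..<d]. (complex_of_real (p k) \<cdot>\<^sub>m outer (x k)) $$ (a, b))"
    using fe a b r by simp
  also have "\<dots> = (\<Sum>k\<in>{..<d}. (complex_of_real (p k) \<cdot>\<^sub>m outer (x k)) $$ (a, b))"
    by (simp add: sum_list_distinct_conv_sum_set lessThan_atLeast0)
  also have "\<dots> = Fc d x p a b" unfolding Fc_def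
  proof (rule sum.cong[OF refl])
    fix k assume "k \<in> {..<d}"
    then have "dim_vec (x k) = d" using xcar by auto
    then show "(complex_of_real (p k) \<cdot>\<^sub>m outer (x k)) $$ (a, b) = complex_of_real (p k) * (x k $ a * cnj (x k $ b))"
      using a b by (simp add: outer_def)
  qed
  finally show ?thesis .
qed

lemma rho_pp: "a < d \<Longrightarrow> b < d \<Longrightarrow> parity L a \<noteq> parity L b \<Longrightarrow> \<rho> $$ (a, b) = 0"
  using fs by (simp add: fermionic_state_def)

lemma Fc_mult:
  assumes a: "a < d" and b: "b < d"
  shows "(\<Sum>e<d. \<rho> $$ (a, e) * Fc d x c e b) = Fc d x (\<lambda>i. p i * c i) a b"
proof -
  have "(\<Sum>e<d. \<rho> $$ (a, e) * Fc d x c e b) = (\<Sum>e<d. Fc d x p a e * Fc d x c e b)"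
    using a by (intro sum.cong) (auto simp: rho_entry)
  also have "\<dots> = (\<Sum>e<d. \<Sum>k<d. \<Sum>i<d. (complex_of_real (p k) * x k $ a * complex_of_real (c i) * cnj (x i $ b)) * (cnj (x k $ e) * x i $ e))"
    unfolding Fc_def sum_product by (intro sum.cong refl) (simp add: mult_ac)
  also have "\<dots> = (\<Sum>k<d. \<Sum>i<d. (complex_of_real (p k) * x k $ a * complex_of_real (c i) * cnj (x i $ b)) * (\<Sum>e<d. cnj (x k $ e) * x i $ e))"
  proof -
    let ?f = "\<lambda>e k i. (complex_of_real (p k) * x k $ a * complex_of_real (c i) * cnj (x i $ b)) * (cnj (x k $ e) * x i $ e)"
    have "(\<Sum>e<d. \<Sum>k<d. \<Sum>i<d. ?f e k i) = (\<Sum>k<d. \<Sum>e<d. \<Sum>i<d. ?f e k i)" by (rule sum.swap)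
    also have "\<dots> = (\<Sum>k<d. \<Sum>i<d. \<Sum>e<d. ?f e k i)" by (rule sum.cong[OF refl], rule sum.swap)
    finally show ?thesis by (simp add: sum_distrib_left)
  qed
  also have "\<dots> = (\<Sum>k<d. \<Sum>i<d. if i = k then complex_of_real (p k) * x k $ a * complex_of_real (c i) * cnj (x i $ b) else 0)"
    by (intro sum.cong refl) (simp add: orth)
  also have "\<dots> = Fc d x (\<lambda>i. p i * c i) a b"
    unfolding Fc_def by (intro sum.cong refl) (simp add: mult_ac)
  finally show ?thesis .
qed

lemma Fc_pp:
  assumes "finite A"
  shows "\<forall>a<d. \<forall>b<d. parity L a \<noteq> parity L b \<longrightarrow> Fc d x (\<lambda>i. p i * (\<Prod>\<mu>\<in>A. p i - \<mu>)) a b = 0"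
  using assms
proof (induction A rule: finite_induct)
  case empty
  then show ?case using rho_pp rho_entry by simp
next
  case (insert \<mu> A)
  let ?c = "\<lambda>i. p i * (\<Prod>\<mu>\<in>A. p i - \<mu>)"
  show ?case
  proof (intro allI impI)
    fix a b assume a: "a < d" and b: "b < d" and pab: "parity L a \<noteq> parity L b"
    have e: "Fc d x (\<lambda>i. p i * (\<Prod>\<mu>\<in>insert \<mu> A. p i - \<mu>)) a b = Fc d x (\<lambda>i. p i * ?c i) a b - complex_of_real \<mu> * Fc d x ?c a b"
      unfolding Fc_def using insert.hyps
      by (simp add: sum_distrib_left sum_subtractf[symmetric] algebra_simps)
    have z1: "Fc d x ?c a b = 0" using insert.IH a b pab by blast
    have "(\<Sum>e<d. \<rho> $$ (a, e) * Fc d x ?c e b) = 0"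
    proof (rule sum.neutral, rule ballI)
      fix e assume "e \<in> {..<d}"
      then have e: "e < d" by simp
      show "\<rho> $$ (a, e) * Fc d x ?c e b = 0"
      proof (cases "parity L a = parity L e")
        case True
        then have "Fc d x ?c e b = 0" using insert.IH e b pab by auto
        then show ?thesis by simp
      next
        case False
        then show ?thesis using rho_pp[OF a e] by simp
      qed
    qed
    then have z2: "Fc d x (\<lambda>i. p i * ?c i) a b = 0" using Fc_mult[OF a b, of ?c] by simp
    show "Fc d x (\<lambda>i. p i * (\<Prod>\<mu>\<in>insert \<mu> A. p i - \<mu>)) a b = 0" using e z1 z2 by simp
  qed
qed

lemma spectral_pp:
  assumes lam: "lm \<noteq> 0" and a: "a < d" and b: "b < d" and pab: "parity L a \<noteq> parity L b"
  shows "(\<Sum>i\<in>{i. i < d \<and> p i = lm}. x i $ a * cnj (x i $ b)) = 0"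
proof -
  define A where "A = p ` {..<d} - {lm}"
  define K where "K = (\<Prod>\<mu>\<in>A. lm - \<mu>)"
  have fA: "finite A" unfolding A_def by simp
  have K0: "K \<noteq> 0" unfolding K_def A_def by (simp add: prod_zero_iff)
  have c: "p i * (\<Prod>\<mu>\<in>A. p i - \<mu>) = (if p i = lm then lm * K else 0)" if "i < d" for i
  proof (cases "p i = lm")
    case True then show ?thesis unfolding K_def by simp
  next
    case False
    then have "p i \<in> A" unfolding A_def using that by auto
    then have "(\<Prod>\<mu>\<in>A. p i - \<mu>) = 0" using fA by (simp add: prod_zero_iff)
    then show ?thesis using False by simp
  qed
  have "0 = Fc d x (\<lambda>i. p i * (\<Prod>\<mu>\<in>A. p i - \<mu>)) a b" using Fc_pp[OF fA] a b pab by simp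
  also have "\<dots> = (\<Sum>i<d. if p i = lm then complex_of_real (lm * K) * (x i $ a * cnj (x i $ b)) else 0)"
    unfolding Fc_def by (intro sum.cong refl) (simp add: c)
  also have "\<dots> = (\<Sum>i\<in>{i \<in> {..<d}. p i = lm}. complex_of_real (lm * K) * (x i $ a * cnj (x i $ b)))"
    by (rule sum.inter_filter[symmetric]) simp
  also have "\<dots> = complex_of_real (lm * K) * (\<Sum>i\<in>{i. i < d \<and> p i = lm}. x i $ a * cnj (x i $ b))"
  proof -
    have seq: "{i \<in> {..<d}. p i = lm} = {i. i < d \<and> p i = lm}" by auto
    show ?thesis unfolding seq by (rule sum_distrib_left[symmetric])
  qed
  finally show ?thesis using lam K0 by simp
qed

end



definition pc :: "nat \<Rightarrow> nat \<Rightarrow> nat" where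
  "pc n a = card {m. m < n \<and> bit a m}"

lemma parity_pc: "parity n a = even (pc n a)"
proof -
  have "(\<lambda>k. n - 1 - k) ` {k. k < n \<and> occ n k a} = {m. m < n \<and> bit a m}"
  proof
    show "(\<lambda>k. n - 1 - k) ` {k. k < n \<and> occ n k a} \<subseteq> {m. m < n \<and> bit a m}"
      by (auto simp: occ_bit)
    show "{m. m < n \<and> bit a m} \<subseteq> (\<lambda>k. n - 1 - k) ` {k. k < n \<and> occ n k a}"
    proof
      fix m assume m: "m \<in> {m. m < n \<and> bit a m}"
      then have "m = n - 1 - (n - 1 - m)" "n - 1 - m \<in> {k. k < n \<and> occ n k a}"
        by (auto simp: occ_bit)
      then show "m \<in> (\<lambda>k. n - 1 - k) ` {k. k < n \<and> occ n k a}" by blast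
    qed
  qed
  moreover have "inj_on (\<lambda>k. n - 1 - k) {k. k < n \<and> occ n k a}"
    by (auto simp: inj_on_def)
  ultimately have "card {k. k < n \<and> occ n k a} = pc n a"
    unfolding pc_def by (metis card_image)
  then show ?thesis by (simp add: parity_def)
qed

lemma pc_split: "pc (L + n) a = pc L (a div 2^n) + pc n (a mod 2^n)"
proof -
  have b1: "bit (a div 2^n) t = bit a (n + t)" for t
    by (simp add: bit_iff_odd power_add div_mult2_eq)
  have b2: "bit (a mod 2^n) m = (m < n \<and> bit a m)" for m
    by (metis bit_take_bit_iff take_bit_eq_mod)
  have e: "{m. m < L + n \<and> bit a m} = {m. m < n \<and> bit a m} \<union> (\<lambda>t. n + t) ` {t. t < L \<and> bit a (n + t)}"
  proof
    show "{m. m < L + n \<and> bit a m} \<subseteq> {m. m < n \<and> bit a m} \<union> (\<lambda>t. n + t) ` {t. t < L \<and> bit a (n + t)}"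
    proof
      fix m assume m: "m \<in> {m. m < L + n \<and> bit a m}"
      show "m \<in> {m. m < n \<and> bit a m} \<union> (\<lambda>t. n + t) ` {t. t < L \<and> bit a (n + t)}"
      proof (cases "m < n")
        case True then show ?thesis using m by auto
      next
        case False
        then have "m = n + (m - n)" "m - n \<in> {t. t < L \<and> bit a (n + t)}" using m by auto
        then show ?thesis by blast
      qed
    qed
  qed auto
  have "card ({m. m < n \<and> bit a m} \<union> (\<lambda>t. n + t) ` {t. t < L \<and> bit a (n + t)}) =
        card {m. m < n \<and> bit a m} + card ((\<lambda>t. n + t) ` {t. t < L \<and> bit a (n + t)})"
    by (rule card_Un_disjoint) auto
  also have "card ((\<lambda>t. n + t) ` {t. t < L \<and> bit a (n + t)}) = card {t. t < L \<and> bit a (n + t)}"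
    by (rule card_image) (auto simp: inj_on_def)
  finally show ?thesis unfolding pc_def e b1 b2 by simp
qed

context
  fixes L :: nat and \<rho> :: "complex mat" and p :: "nat \<Rightarrow> real" and x :: "nat \<Rightarrow> complex vec"
  assumes fs: "fermionic_state L \<rho>" and ed: "eigendecomp (2 ^ L) \<rho> p x"
begin

abbreviation "dd \<equiv> (2::nat) ^ L"

lemma xcar': "i < dd \<Longrightarrow> x i \<in> carrier_vec dd"
  using xcar[OF fs ed] .

lemma ts_dim: "set zs \<subseteq> {..<dd} \<Longrightarrow> dim_vec (tensor_seq x zs) = dd ^ length zs"
proof (induction "zs")
  case Nil
  then show ?case by (simp add: tensor_seq_def)
next
  case (Cons i zs)
  then have "dim_vec (x i) = dd" using xcar' by auto
  then show ?case using Cons by (simp add: tensor_seq_def kron_vec_def)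
qed

lemma ts_Cons:
  assumes "set ys \<subseteq> {..<dd}" "i < dd" "a < dd ^ Suc (length ys)"
  shows "tensor_seq x (i # ys) $ a = x i $ (a div dd ^ length ys) * tensor_seq x ys $ (a mod dd ^ length ys)"
proof -
  have di: "dim_vec (x i) = dd" using xcar' assms(2) by auto
  have dy: "dim_vec (tensor_seq x ys) = dd ^ length ys" using ts_dim assms(1) by simp
  have "tensor_seq x (i # ys) = kron_vec (x i) (tensor_seq x ys)" by (simp add: tensor_seq_def)
  then show ?thesis using assms(3) di dy by (simp add: kron_vec_def)
qed

definition SN :: "nat \<Rightarrow> nat list set" where
  "SN N = {zs. length zs = N \<and> set zs \<subseteq> {..<dd}}"

lemma SN_finite: "finite (SN N)"
proof -
  have "SN N = {xs. set xs \<subseteq> {..<dd} \<and> length xs = N}" unfolding SN_def by auto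
  then show ?thesis using finite_lists_length_eq[of "{..<dd}" N] by simp
qed

lemma main_ind:
  "\<forall>T a b. (\<forall>zs js. map p zs = map p js \<longrightarrow> T zs = T js) \<longrightarrow> (\<forall>zs. T zs \<longrightarrow> (\<forall>i\<in>set zs. p i \<noteq> 0)) \<longrightarrow>
     a < dd ^ N \<longrightarrow> b < dd ^ N \<longrightarrow> parity (N * L) a \<noteq> parity (N * L) b \<longrightarrow>
     (\<Sum>zs\<in>SN N. if T zs then tensor_seq x zs $ a * cnj (tensor_seq x zs $ b) else 0) = 0"
proof (induction N)
  case 0
  show ?case
  proof (intro allI impI)
    fix T a b
    assume h: "a < dd ^ 0" "b < dd ^ 0" "parity (0 * L) a \<noteq> parity (0 * L) b"
    have "a = 0" "b = 0" using h(1,2) by auto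
    then show "(\<Sum>zs\<in>SN 0. if T zs then tensor_seq x zs $ a * cnj (tensor_seq x zs $ b) else 0) = 0"
      using h(3) by blast
  qed
next
  case (Suc N)
  show ?case
  proof (intro allI impI)
    fix T a b
    assume inv: "\<forall>zs js. map p zs = map p js \<longrightarrow> T zs = T js"
      and nz: "\<forall>zs. T zs \<longrightarrow> (\<forall>i\<in>set zs. p i \<noteq> 0)"
      and a: "a < dd ^ Suc N" and b: "b < dd ^ Suc N" and pab: "parity (Suc N * L) a \<noteq> parity (Suc N * L) b"
    let ?D = "dd ^ N"
    have Dpos: "0 < ?D" by simp
    define a0 where "a0 = a div ?D"
    define a1 where "a1 = a mod ?D"
    define b0 where "b0 = b div ?D"
    define b1 where "b1 = b mod ?D"
    have a0: "a0 < dd" unfolding a0_def using a by (simp add: less_mult_imp_div_less mult.commute)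
    have b0: "b0 < dd" unfolding b0_def using b by (simp add: less_mult_imp_div_less mult.commute)
    have a1: "a1 < ?D" unfolding a1_def using Dpos by simp
    have b1: "b1 < ?D" unfolding b1_def using Dpos by simp
    have D2: "?D = 2 ^ (N * L)" by (simp add: power_mult[symmetric] mult.commute)
    have par: "parity (Suc N * L) a = (parity L a0 = parity (N * L) a1)"
      "parity (Suc N * L) b = (parity L b0 = parity (N * L) b1)"
      unfolding parity_pc a0_def a1_def b0_def b1_def D2
      by (simp_all add: pc_split)
    let ?g = "\<lambda>i. x i $ a0 * cnj (x i $ b0)"
    let ?h = "\<lambda>ys. tensor_seq x ys $ a1 * cnj (tensor_seq x ys $ b1)"
    let ?f = "\<lambda>zs. if T zs then tensor_seq x zs $ a * cnj (tensor_seq x zs $ b) else 0"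
    have img: "SN (Suc N) = (\<lambda>(i, ys). i # ys) ` ({..<dd} \<times> SN N)"
    proof
      show "SN (Suc N) \<subseteq> (\<lambda>(i, ys). i # ys) ` ({..<dd} \<times> SN N)"
      proof
        fix zs assume "zs \<in> SN (Suc N)"
        then obtain i ys where "zs = i # ys" "length ys = N" "i < dd" "set ys \<subseteq> {..<dd}"
          unfolding SN_def by (auto simp: length_Suc_conv)
        then show "zs \<in> (\<lambda>(i, ys). i # ys) ` ({..<dd} \<times> SN N)" unfolding SN_def by auto
      qed
    qed (auto simp: SN_def)
    have inj: "inj_on (\<lambda>(i, ys). i # ys) ({..<dd} \<times> SN N)" by (auto simp: inj_on_def)
    have "(\<Sum>zs\<in>SN (Suc N). ?f zs) = (\<Sum>(i, ys)\<in>{..<dd} \<times> SN N. ?f (i # ys))"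
      unfolding img by (subst sum.reindex[OF inj]) (rule sum.cong[OF refl], auto)
    also have "\<dots> = (\<Sum>i<dd. \<Sum>ys\<in>SN N. ?f (i # ys))"
      by (rule sum.cartesian_product[symmetric])
    also have "\<dots> = (\<Sum>i<dd. \<Sum>ys\<in>SN N. if T (i # ys) then ?g i * ?h ys else 0)"
    proof (intro sum.cong refl)
      fix i ys assume i: "i \<in> {..<dd}" and ys: "ys \<in> SN N"
      then have l: "length ys = N" "set ys \<subseteq> {..<dd}" unfolding SN_def by auto
      have ta: "tensor_seq x (i # ys) $ a = x i $ a0 * tensor_seq x ys $ a1"
        using ts_Cons[OF l(2), of i a] i a l(1) unfolding a0_def a1_def by simp
      have tb: "tensor_seq x (i # ys) $ b = x i $ b0 * tensor_seq x ys $ b1"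
        using ts_Cons[OF l(2), of i b] i b l(1) unfolding b0_def b1_def by simp
      show "?f (i # ys) = (if T (i # ys) then ?g i * ?h ys else 0)"
        unfolding ta tb by (simp add: mult_ac)
    qed
    also have "\<dots> = 0"
    proof (cases "parity L a0 = parity L b0")
      case True
      then have p1: "parity (N * L) a1 \<noteq> parity (N * L) b1" using pab par by auto
      have "(\<Sum>i<dd. \<Sum>ys\<in>SN N. if T (i # ys) then ?g i * ?h ys else 0) =
            (\<Sum>i<dd. ?g i * (\<Sum>ys\<in>SN N. if T (i # ys) then ?h ys else 0))"
        unfolding sum_distrib_left by (intro sum.cong refl) simp
      also have "\<dots> = 0"
      proof (intro sum.neutral ballI)
        fix i assume "i \<in> {..<dd}"
        have inv': "\<forall>zs js. map p zs = map p js \<longrightarrow> T (i # zs) = T (i # js)" using inv by simp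
        have nz': "\<forall>zs. T (i # zs) \<longrightarrow> (\<forall>i\<in>set zs. p i \<noteq> 0)" using nz by simp
        have "(\<Sum>ys\<in>SN N. if T (i # ys) then ?h ys else 0) = 0"
          using Suc.IH[THEN spec[of _ "\<lambda>zs. T (i # zs)"], THEN spec[of _ a1], THEN spec[of _ b1]] inv' nz' a1 b1 p1
          by fast
        then show "?g i * (\<Sum>ys\<in>SN N. if T (i # ys) then ?h ys else 0) = 0" by simp
      qed
      finally show ?thesis .
    next
      case False
      have "(\<Sum>i<dd. \<Sum>ys\<in>SN N. if T (i # ys) then ?g i * ?h ys else 0) =
            (\<Sum>ys\<in>SN N. \<Sum>i<dd. if T (i # ys) then ?g i * ?h ys else 0)"
        by (rule sum.swap)
      also have "\<dots> = (\<Sum>ys\<in>SN N. ?h ys * (\<Sum>i<dd. if T (i # ys) then ?g i else 0))"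
        unfolding sum_distrib_left by (intro sum.cong refl) simp
      also have "\<dots> = 0"
      proof (intro sum.neutral ballI)
        fix ys assume ys: "ys \<in> SN N"
        let ?G = "\<lambda>i. if T (i # ys) then ?g i else 0"
        have "(\<Sum>i<dd. ?G i) = (\<Sum>lm\<in>p ` {..<dd}. \<Sum>i\<in>{i \<in> {..<dd}. p i = lm}. ?G i)"
          by (rule sum.image_gen) simp
        also have "\<dots> = 0"
        proof (rule sum.neutral, rule ballI)
          fix lm assume "lm \<in> p ` {..<dd}"
          show "(\<Sum>i\<in>{i \<in> {..<dd}. p i = lm}. ?G i) = 0"
          proof (cases "\<exists>i0\<in>{i \<in> {..<dd}. p i = lm}. T (i0 # ys)")
            case False
            then show ?thesis by (intro sum.neutral) auto
          next
            case True
            then obtain i0 where i0: "i0 < dd" "p i0 = lm" "T (i0 # ys)" by auto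
            have lm0: "lm \<noteq> 0" using nz i0 by auto
            have allT: "T (i # ys)" if "i \<in> {i \<in> {..<dd}. p i = lm}" for i
            proof -
              have "map p (i # ys) = map p (i0 # ys)" using that i0 by simp
              then show ?thesis using inv i0(3) by blast
            qed
            have "(\<Sum>i\<in>{i \<in> {..<dd}. p i = lm}. ?G i) = (\<Sum>i\<in>{i \<in> {..<dd}. p i = lm}. ?g i)"
              using allT by (intro sum.cong refl) auto
            also have "\<dots> = (\<Sum>i\<in>{i. i < dd \<and> p i = lm}. ?g i)"
              by (intro sum.cong) auto
            also have "\<dots> = 0"
              by (rule spectral_pp[OF fs ed lm0 a0 b0 False])
            finally show ?thesis .
          qed
        qed
        finally show "?h ys * (\<Sum>i<dd. ?G i) = 0" by simp
      qed
      finally show ?thesis .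
    qed
    finally show "(\<Sum>zs\<in>SN (Suc N). ?f zs) = 0" .
  qed
qed

lemma seq_prob_map: "map p zs = map p js \<Longrightarrow> seq_prob p zs = seq_prob p js"
proof -
  assume m: "map p zs = map p js"
  then have l: "length zs = length js" by (metis length_map)
  show ?thesis unfolding seq_prob_def l
  proof (rule prod.cong[OF refl])
    fix j assume "j \<in> {..<length js}"
    then have j: "j < length zs" "j < length js" using l by auto
    have "map p zs ! j = map p js ! j" using m by simp
    then show "p (zs ! j) = p (js ! j)" using j by simp
  qed
qed

lemma seq_prob_nz: "seq_prob p zs > 0 \<Longrightarrow> i \<in> set zs \<Longrightarrow> p i \<noteq> 0"
proof -
  assume s: "seq_prob p zs > 0" and i: "i \<in> set zs"
  then obtain j where j: "j < length zs" "zs ! j = i" by (auto simp: in_set_conv_nth)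
  show "p i \<noteq> 0"
  proof
    assume "p i = 0"
    then have "seq_prob p zs = 0" unfolding seq_prob_def using j
      by (intro prod_zero) auto
    then show False using s by simp
  qed
qed

lemma typ_proj:
  "typical_proj dd p x N \<epsilon> \<in> carrier_mat (2 ^ (N * L)) (2 ^ (N * L)) \<and>
   (\<forall>a<2 ^ (N * L). \<forall>b<2 ^ (N * L). parity (N * L) a \<noteq> parity (N * L) b \<longrightarrow> typical_proj dd p x N \<epsilon> $$ (a, b) = 0)"
proof -
  let ?T = "typical dd p N \<epsilon>"
  let ?seqs = "filter ?T (List.n_lists N [0..<dd])"
  let ?D = "dd ^ N"
  have D2: "?D = 2 ^ (N * L)" by (simp add: power_mult[symmetric] mult.commute)
  have P: "typical_proj dd p x N \<epsilon> = foldr (\<lambda>zs S. outer (tensor_seq x zs) + S) ?seqs (0\<^sub>m ?D ?D)"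
    unfolding typical_proj_def Let_def by (rule refl)
  have sseq: "set ?seqs = {zs \<in> SN N. ?T zs}"
    by (auto simp: SN_def set_n_lists)
  have dimz: "zs \<in> set ?seqs \<Longrightarrow> dim_vec (tensor_seq x zs) = ?D" for zs
  proof -
    assume "zs \<in> set ?seqs"
    then have "zs \<in> SN N" using sseq by blast
    then have "length zs = N" "set zs \<subseteq> {..<dd}" by (auto simp: SN_def)
    then show ?thesis using ts_dim by simp
  qed
  have fe: "foldr (\<lambda>zs S. outer (tensor_seq x zs) + S) ?seqs (0\<^sub>m ?D ?D) \<in> carrier_mat ?D ?D \<and>
    (\<forall>i<?D. \<forall>j<?D. foldr (\<lambda>zs S. outer (tensor_seq x zs) + S) ?seqs (0\<^sub>m ?D ?D) $$ (i, j) =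
       (\<Sum>zs\<leftarrow>?seqs. outer (tensor_seq x zs) $$ (i, j)))"
  proof (rule foldr_entry)
    show "\<forall>a\<in>set ?seqs. outer (tensor_seq x a) \<in> carrier_mat ?D ?D" using dimz by (simp add: outer_def)
  qed simp
  have dist: "distinct ?seqs" by (simp add: distinct_n_lists)
  have inv: "\<forall>zs js. map p zs = map p js \<longrightarrow> ?T zs = ?T js"
  proof (intro allI impI)
    fix zs js assume m: "map p zs = map p js"
    show "?T zs = ?T js" unfolding typical_def by (simp only: seq_prob_map[OF m])
  qed
  have nz: "\<forall>zs. ?T zs \<longrightarrow> (\<forall>i\<in>set zs. p i \<noteq> 0)"
    using seq_prob_nz unfolding typical_def by blast
  show ?thesis
  proof (intro conjI allI impI)
    show "typical_proj dd p x N \<epsilon> \<in> carrier_mat (2 ^ (N * L)) (2 ^ (N * L))" using fe P D2 by simp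
    fix a b assume a: "a < 2 ^ (N * L)" and b: "b < 2 ^ (N * L)" and pab: "parity (N * L) a \<noteq> parity (N * L) b"
    have a': "a < ?D" and b': "b < ?D" using a b D2 by auto
    have "typical_proj dd p x N \<epsilon> $$ (a, b) = (\<Sum>zs\<leftarrow>?seqs. outer (tensor_seq x zs) $$ (a, b))"
      using fe P a' b' by simp
    also have "\<dots> = (\<Sum>zs\<in>set ?seqs. outer (tensor_seq x zs) $$ (a, b))"
      by (rule sum_list_distinct_conv_sum_set[OF dist])
    also have "\<dots> = (\<Sum>zs\<in>{zs \<in> SN N. ?T zs}. tensor_seq x zs $ a * cnj (tensor_seq x zs $ b))"
      unfolding sseq[symmetric] by (rule sum.cong[OF refl]) (use dimz a' b' in \<open>simp add: outer_def\<close>)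
    also have "\<dots> = (\<Sum>zs\<in>SN N. if ?T zs then tensor_seq x zs $ a * cnj (tensor_seq x zs $ b) else 0)"
      by (rule sum.inter_filter[OF SN_finite])
    also have "\<dots> = 0"
      by (rule mp[OF mp[OF mp[OF mp[OF mp[OF main_ind[THEN spec[of _ ?T], THEN spec[of _ a], THEN spec[of _ b]] inv] nz] a'] b'] pab])
    finally show "typical_proj dd p x N \<epsilon> $$ (a, b) = 0" .
  qed
qed

end

theorem lemma1:
  fixes L N :: nat and \<rho> :: "complex mat" and \<epsilon> :: real
    and p :: "nat \<Rightarrow> real" and x :: "nat \<Rightarrow> complex vec"
  assumes "fermionic_state L \<rho>"
    and "eigendecomp (2 ^ L) \<rho> p x"
    and "N \<ge> 1" and "\<epsilon> > 0"
  shows "\<exists>Ks. admissible_kraus (N * L) Ks \<and> typical_proj (2 ^ L) p x N \<epsilon> \<in> set Ks"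
proof -
  have t: "typical_proj (2 ^ L) p x N \<epsilon> \<in> carrier_mat (2 ^ (N * L)) (2 ^ (N * L)) \<and>
   (\<forall>a<2 ^ (N * L). \<forall>b<2 ^ (N * L). parity (N * L) a \<noteq> parity (N * L) b \<longrightarrow> typical_proj (2 ^ L) p x N \<epsilon> $$ (a, b) = 0)"
    by (rule typ_proj[OF assms(1,2)])
  have "typical_proj (2 ^ L) p x N \<epsilon> \<in> even_ops (N * L)"
    by (rule pp_even[OF conjunct1[OF t] conjunct2[OF t]])
  then have "admissible_kraus (N * L) [typical_proj (2 ^ L) p x N \<epsilon>]"
    by (simp add: admissible_kraus_def)
  then show ?thesis by (intro exI[of _ "[typical_proj (2 ^ L) p x N \<epsilon>]"]) simp
qed


end
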